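(* Let $U\in\mathsf{U}(\mathcal{H}_A\otimes\mathcal{H}_B)$ with $d_A=\dim\mathcal{H}_A$, $d_B=\dim\mathcal{H}_B$. The infimum of $2\|c\|_1^2-\|c\|_2^2$ over all decompositions $U=\sum_{j=1}^mc_jV_j\otimes W_j$ (with $m\ge1$ arbitrary, $c\in\mathbb{R}^m$, $V_j\in\mathsf{U}(\mathcal{H}_A)$, $W_j\in\mathsf{U}(\mathcal{H}_B)$) is attained, and it is attained by a decomposition with $m=2d_A^2d_B^2$ terms. *)

theory Defs
  imports "HOL-Analysis.Analysis"
begin

text \<open>Operators on a finite-dimensional Hilbert space with orthonormal basis indexed
  by the finite type 'n are represented as complex matrices complex^'n^'n.
  The tensor product H_A \<otimes> H_B has basis indexed by 'a \<times> 'b.\<close>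

definition adjoint_mat :: "complex^'n^'m \<Rightarrow> complex^'m^'n" where
  "adjoint_mat U = (\<chi> i j. cnj (U $ j $ i))"

definition unitary_mat :: "complex^'n^'n \<Rightarrow> bool" where
  "unitary_mat U \<longleftrightarrow> U ** adjoint_mat U = mat 1 \<and> adjoint_mat U ** U = mat 1"

definition kron :: "complex^'a^'a \<Rightarrow> complex^'b^'b \<Rightarrow> complex^('a \<times> 'b)^('a \<times> 'b)" where
  "kron V W = (\<chi> p q. V $ fst p $ fst q * W $ snd p $ snd q)"

definition is_decomp ::
  "complex^('a \<times> 'b)^('a \<times> 'b) \<Rightarrow> nat \<Rightarrow> (nat \<Rightarrow> real) \<Rightarrow> (nat \<Rightarrow> complex^'a^'a)
     \<Rightarrow> (nat \<Rightarrow> complex^'b^'b) \<Rightarrow> bool" where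
  "is_decomp U m c V W \<longleftrightarrow> m \<ge> 1 \<and> (\<forall>j<m. unitary_mat (V j) \<and> unitary_mat (W j)) \<and>
     U = (\<Sum>j<m. c j *\<^sub>R kron (V j) (W j))"

definition decomp_cost :: "nat \<Rightarrow> (nat \<Rightarrow> real) \<Rightarrow> real" where
  "decomp_cost m c = 2 * (\<Sum>j<m. \<bar>c j\<bar>)^2 - (\<Sum>j<m. (c j)^2)"

end

theory Submission
  imports Defs
begin


definition cst :: "nat set \<Rightarrow> (nat \<Rightarrow> real) \<Rightarrow> real" where
  "cst J x = 2 * (\<Sum>j\<in>J. x j)^2 - (\<Sum>j\<in>J. (x j)^2)"

lemma cst_line:
  "cst J (\<lambda>j. c j + s * d j) = cst J c
     + s * (4 * (\<Sum>j\<in>J. c j) * (\<Sum>j\<in>J. d j) - 2 * (\<Sum>j\<in>J. c j * d j))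
     + s^2 * (2 * (\<Sum>j\<in>J. d j)^2 - (\<Sum>j\<in>J. (d j)^2))"
proof -
  have 1: "(\<Sum>j\<in>J. c j + s * d j) = (\<Sum>j\<in>J. c j) + s * (\<Sum>j\<in>J. d j)"
    by (simp add: sum.distrib sum_distrib_left)
  have 2: "(\<Sum>j\<in>J. (c j + s * d j)^2) = (\<Sum>j\<in>J. (c j)^2) + 2 * s * (\<Sum>j\<in>J. c j * d j)
      + s^2 * (\<Sum>j\<in>J. (d j)^2)"
    by (simp add: power2_sum sum.distrib sum_distrib_left power_mult_distrib algebra_simps)
  show ?thesis unfolding cst_def 1 2 by (simp add: power2_sum algebra_simps power2_eq_square)
qed

lemma no_crit:
  fixes x d :: "nat \<Rightarrow> real"
  assumes J: "finite J" and x: "\<forall>j\<in>J. 0 \<le> x j" and T: "0 < (\<Sum>j\<in>J. x j)"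
    and crit: "2 * (\<Sum>j\<in>J. x j) * (\<Sum>j\<in>J. d j) = (\<Sum>j\<in>J. x j * d j)"
  shows "2 * (\<Sum>j\<in>J. d j)^2 - (\<Sum>j\<in>J. (d j)^2) \<le> 0"
proof -
  define T where "T = (\<Sum>j\<in>J. x j)"
  define A where "A = (\<Sum>j\<in>J. d j)"
  define Q where "Q = (\<Sum>j\<in>J. (d j)^2)"
  have "J \<noteq> {}" using T by auto
  define m where "m = Max ((\<lambda>j. \<bar>d j\<bar>) ` J)"
  have mJ: "m \<in> (\<lambda>j. \<bar>d j\<bar>) ` J" unfolding m_def using J \<open>J \<noteq> {}\<close> by (intro Max_in) auto
  then obtain k where k: "k \<in> J" "m = \<bar>d k\<bar>" by auto
  have mge: "\<bar>d j\<bar> \<le> m" if "j \<in> J" for j unfolding m_def using J that by (intro Max_ge) auto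
  have "\<bar>\<Sum>j\<in>J. x j * d j\<bar> \<le> (\<Sum>j\<in>J. \<bar>x j * d j\<bar>)" by (rule sum_abs)
  also have "\<dots> \<le> (\<Sum>j\<in>J. x j * m)"
    using x mge by (intro sum_mono) (simp add: abs_mult mult_left_mono)
  also have "\<dots> = T * m" by (simp add: T_def sum_distrib_right)
  finally have le: "\<bar>\<Sum>j\<in>J. x j * d j\<bar> \<le> T * m" .
  have "\<bar>\<Sum>j\<in>J. x j * d j\<bar> = T * (2 * \<bar>A\<bar>)"
  proof -
    have "(\<Sum>j\<in>J. x j * d j) = T * (2 * A)" using crit unfolding T_def A_def by (simp add: algebra_simps)
    then show ?thesis using T unfolding T_def[symmetric] by (simp add: abs_mult)
  qed
  with le have "T * (2 * \<bar>A\<bar>) \<le> T * m" by simp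
  then have "2 * \<bar>A\<bar> \<le> m" using T unfolding T_def[symmetric] by simp
  moreover have "m^2 \<le> Q" unfolding Q_def k(2)
    using J k(1) member_le_sum[of k J "\<lambda>j. (d j)^2"] by simp
  moreover have "0 \<le> \<bar>A\<bar>" by simp
  ultimately have "4 * A^2 \<le> Q"
  proof -
    have "(2 * \<bar>A\<bar>)^2 \<le> m^2" using \<open>2 * \<bar>A\<bar> \<le> m\<close> by (intro power_mono) auto
    then show ?thesis using \<open>m^2 \<le> Q\<close> by (simp add: power_mult_distrib)
  qed
  then show ?thesis unfolding A_def[symmetric] Q_def[symmetric] by (smt (verit) zero_le_power2)
qed

lemma endpoint:
  fixes c d :: "nat \<Rightarrow> real"
  assumes J: "finite J" and cpos: "\<forall>j\<in>J. 0 < c j" and neg: "\<exists>j\<in>J. d j < 0"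
  shows "\<exists>se>0. (\<forall>j\<in>J. 0 \<le> c j + se * d j) \<and> (\<exists>j\<in>J. c j + se * d j = 0)
     \<and> (\<forall>j\<in>J. d j < 0 \<longrightarrow> se \<le> c j / - d j)"
proof -
  define E where "E = (\<lambda>j. c j / - d j) ` {j\<in>J. d j < 0}"
  have fE: "finite E" "E \<noteq> {}" using J neg by (auto simp: E_def)
  define se where "se = Min E"
  have "se \<in> E" unfolding se_def using fE by (rule Min_in)
  then obtain j0 where j0: "j0 \<in> J" "d j0 < 0" "se = c j0 / - d j0" by (auto simp: E_def)
  have le: "se \<le> c j / - d j" if "j \<in> J" "d j < 0" for j
    unfolding se_def using fE that by (intro Min_le) (auto simp: E_def)
  have sepos: "se > 0" using j0 cpos by (simp add: divide_pos_neg)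
  have "0 \<le> c j + se * d j" if "j \<in> J" for j
  proof (cases "d j < 0")
    case True
    have "se * (- d j) \<le> (c j / - d j) * (- d j)" using le[OF that True] True by (intro mult_right_mono) auto
    also have "\<dots> = c j" using True by simp
    finally show ?thesis by simp
  next
    case False
    then show ?thesis using sepos cpos that by (smt (verit) mult_nonneg_nonneg)
  qed
  moreover have "c j0 + se * d j0 = 0" using j0 by (simp add: field_simps)
  ultimately show ?thesis using sepos le j0 by blast
qed

lemma half:
  fixes c d :: "nat \<Rightarrow> real"
  assumes J: "finite J" and cpos: "\<forall>j\<in>J. 0 < c j" and dnz: "\<exists>j\<in>J. d j \<noteq> 0"
    and b: "4 * (\<Sum>j\<in>J. c j) * (\<Sum>j\<in>J. d j) - 2 * (\<Sum>j\<in>J. c j * d j) \<le> 0"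
    and pos: "\<forall>s. (\<forall>j\<in>J. 0 \<le> c j + s * d j) \<longrightarrow> 0 < (\<Sum>j\<in>J. c j + s * d j)"
  shows "\<exists>s. (\<forall>j\<in>J. 0 \<le> c j + s * d j) \<and> (\<exists>j\<in>J. c j + s * d j = 0)
           \<and> cst J (\<lambda>j. c j + s * d j) \<le> cst J c"
proof -
  define t where "t = (\<Sum>j\<in>J. c j)"
  define A where "A = (\<Sum>j\<in>J. d j)"
  define Q where "Q = (\<Sum>j\<in>J. (d j)^2)"
  define P where "P = (\<Sum>j\<in>J. c j * d j)"
  define bb where "bb = 4 * t * A - 2 * P"
  define a where "a = 2 * A^2 - Q"
  have line: "cst J (\<lambda>j. c j + s * d j) = cst J c + s * bb + s^2 * a" for s
    unfolding cst_line bb_def a_def t_def A_def P_def Q_def ..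
  have bb: "bb \<le> 0" using b unfolding bb_def t_def A_def P_def .
  obtain j1 where j1: "j1 \<in> J" "d j1 \<noteq> 0" using dnz by auto
  have Qpos: "0 < Q" unfolding Q_def using J j1 by (intro sum_pos2[of J j1]) auto
  show ?thesis
  proof (cases "a \<le> 0")
    case True
    have "\<exists>j\<in>J. d j < 0"
    proof (rule ccontr)
      assume "\<not> ?thesis"
      then have dn: "\<forall>j\<in>J. 0 \<le> d j" by auto
      have "d j \<le> A" if "j \<in> J" for j unfolding A_def
        using J that dn member_le_sum[of j J d] by simp
      then have "(d j)^2 \<le> d j * A" if "j \<in> J" for j
        using dn that by (simp add: power2_eq_square mult_left_mono)
      then have "Q \<le> (\<Sum>j\<in>J. d j * A)" unfolding Q_def by (intro sum_mono) auto
      also have "\<dots> = A^2" by (simp add: A_def power2_eq_square sum_distrib_right)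
      finally have "Q \<le> A^2" .
      then show False using True Qpos unfolding a_def by simp
    qed
    then obtain se where se: "se > 0" "\<forall>j\<in>J. 0 \<le> c j + se * d j" "\<exists>j\<in>J. c j + se * d j = 0"
      using endpoint[OF J cpos] by blast
    have "se * bb + se^2 * a \<le> 0" using se(1) bb True
      by (simp add: mult_nonneg_nonpos add_nonpos_nonpos)
    then have "cst J (\<lambda>j. c j + se * d j) \<le> cst J c" using line[of se] by linarith
    then show ?thesis using se(2,3) by blast
  next
    case False
    then have apos: "a > 0" by simp
    define ss where "ss = - bb / (2 * a)"
    have ss0: "ss \<ge> 0" unfolding ss_def using apos bb by (simp add: divide_nonpos_pos)
    have crit: "bb + 2 * a * ss = 0" unfolding ss_def using apos by (simp add: field_simps)
    have "\<not> (\<forall>j\<in>J. 0 \<le> c j + ss * d j)"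
    proof
      assume nn: "\<forall>j\<in>J. 0 \<le> c j + ss * d j"
      have Tpos: "0 < (\<Sum>j\<in>J. c j + ss * d j)" using pos nn by blast
      have T: "(\<Sum>j\<in>J. c j + ss * d j) = t + ss * A"
        by (simp add: t_def A_def sum.distrib sum_distrib_left)
      have X: "(\<Sum>j\<in>J. (c j + ss * d j) * d j) = P + ss * Q"
        by (simp add: P_def Q_def sum.distrib sum_distrib_left algebra_simps power2_eq_square)
      have "2 * (\<Sum>j\<in>J. c j + ss * d j) * (\<Sum>j\<in>J. d j) = (\<Sum>j\<in>J. (c j + ss * d j) * d j)"
        unfolding T X A_def[symmetric] using crit unfolding bb_def a_def by (simp add: algebra_simps power2_eq_square)
      from no_crit[OF J nn Tpos this] have "a \<le> 0" unfolding a_def A_def Q_def .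
      then show False using apos by simp
    qed
    then obtain j where j: "j \<in> J" "c j + ss * d j < 0" by auto
    have dj: "d j < 0"
    proof (rule ccontr)
      assume "\<not> d j < 0"
      then have "0 \<le> ss * d j" using ss0 by simp
      then show False using j cpos by (smt (verit))
    qed
    obtain se where se: "se > 0" "\<forall>j\<in>J. 0 \<le> c j + se * d j" "\<exists>j\<in>J. c j + se * d j = 0"
        "\<forall>j\<in>J. d j < 0 \<longrightarrow> se \<le> c j / - d j"
      using endpoint[OF J cpos] j dj by blast
    have "c j < ss * (- d j)" using j by simp
    then have "c j / - d j < ss" using dj by (subst pos_divide_less_eq) auto
    then have sele: "se \<le> ss" using se(4) j dj by force
    have "se * bb + se^2 * a = se * (bb + a * se)" by (simp add: algebra_simps power2_eq_square)
    also have "\<dots> \<le> se * (bb + a * ss)" using se(1) apos sele by (intro mult_left_mono) auto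
    also have "\<dots> = se * (bb / 2)"
    proof -
      have "a * ss = - bb / 2" using crit by (simp add: algebra_simps)
      then show ?thesis by simp
    qed
    also have "\<dots> \<le> 0" using se(1) bb by (simp add: mult_nonneg_nonpos)
    finally have "cst J (\<lambda>j. c j + se * d j) \<le> cst J c" using line[of se] by linarith
    then show ?thesis using se(2,3) by blast
  qed
qed


lemma indexed_dependent:
  fixes M :: "nat \<Rightarrow> 'v::euclidean_space"
  assumes "finite J" "card J > DIM('v)"
  shows "\<exists>\<alpha>. (\<exists>j\<in>J. \<alpha> j \<noteq> 0) \<and> (\<Sum>j\<in>J. \<alpha> j *\<^sub>R M j) = 0"
proof (cases "inj_on M J")
  case True
  have "card (M ` J) > DIM('v)" using True assms by (simp add: card_image)
  then have "dependent (M ` J)" by (intro dependent_biggerset) auto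
  then obtain u where u: "\<exists>v\<in>M ` J. u v \<noteq> 0" "(\<Sum>v\<in>M ` J. u v *\<^sub>R v) = 0"
    using dependent_finite[of "M ` J"] assms(1) by auto
  have "(\<Sum>j\<in>J. u (M j) *\<^sub>R M j) = 0"
    using u(2) by (simp add: sum.reindex[OF True])
  then show ?thesis using u(1) by (intro exI[of _ "\<lambda>j. u (M j)"]) auto
next
  case False
  then obtain j k where jk: "j \<in> J" "k \<in> J" "j \<noteq> k" "M j = M k" by (auto simp: inj_on_def)
  define \<alpha> where "\<alpha> = (\<lambda>i. if i = j then 1 else if i = k then -1 else (0::real))"
  have "(\<Sum>i\<in>J. \<alpha> i *\<^sub>R M i) = (\<Sum>i\<in>{j,k}. \<alpha> i *\<^sub>R M i)"
    using assms(1) jk by (intro sum.mono_neutral_right) (auto simp: \<alpha>_def)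
  also have "\<dots> = 0" using jk by (simp add: \<alpha>_def)
  finally show ?thesis using jk by (intro exI[of _ \<alpha>]) (auto simp: \<alpha>_def)
qed

lemma cst_restrict:
  assumes "finite K" "J \<subseteq> K" "\<forall>j\<in>K - J. x j = 0"
  shows "cst K x = cst J x"
proof -
  have "(\<Sum>j\<in>K. x j) = (\<Sum>j\<in>J. x j)" using assms by (intro sum.mono_neutral_right) auto
  moreover have "(\<Sum>j\<in>K. (x j)^2) = (\<Sum>j\<in>J. (x j)^2)" using assms by (intro sum.mono_neutral_right) auto
  ultimately show ?thesis unfolding cst_def by simp
qed

lemma reduce:
  fixes M :: "nat \<Rightarrow> 'v::euclidean_space"
  assumes "U \<noteq> 0"
  shows "U = (\<Sum>j<m. c j *\<^sub>R M j) \<Longrightarrow> \<forall>j<m. 0 \<le> c j \<Longrightarrow>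
    \<exists>c'. U = (\<Sum>j<m. c' j *\<^sub>R M j) \<and> (\<forall>j<m. 0 \<le> c' j) \<and>
          card {j. j < m \<and> c' j \<noteq> 0} \<le> DIM('v) \<and> cst {..<m} c' \<le> cst {..<m} c"
proof (induction "card {j. j < m \<and> c j \<noteq> 0}" arbitrary: c rule: less_induct)
  case less
  define J where "J = {j. j < m \<and> c j \<noteq> 0}"
  have fJ: "finite J" unfolding J_def by auto
  show ?case
  proof (cases "card J \<le> DIM('v)")
    case True
    then show ?thesis using less.prems unfolding J_def by blast
  next
    case False
    have cpos: "\<forall>j\<in>J. 0 < c j" using less.prems(2) unfolding J_def by force
    have JK: "J \<subseteq> {..<m}" unfolding J_def by auto
    have UJ: "U = (\<Sum>j\<in>J. c j *\<^sub>R M j)"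
      unfolding less.prems(1) using JK by (intro sum.mono_neutral_right) (auto simp: J_def)
    obtain \<alpha> where \<alpha>: "\<exists>j\<in>J. \<alpha> j \<noteq> 0" "(\<Sum>j\<in>J. \<alpha> j *\<^sub>R M j) = 0"
      using indexed_dependent[OF fJ, of M] False by auto
    define bb where "bb = 4 * (\<Sum>j\<in>J. c j) * (\<Sum>j\<in>J. \<alpha> j) - 2 * (\<Sum>j\<in>J. c j * \<alpha> j)"
    define d where "d = (if bb \<le> 0 then \<alpha> else (\<lambda>j. - \<alpha> j))"
    have dnz: "\<exists>j\<in>J. d j \<noteq> 0" using \<alpha>(1) by (auto simp: d_def)
    have dsum: "(\<Sum>j\<in>J. d j *\<^sub>R M j) = 0" using \<alpha>(2) by (auto simp: d_def sum_negf)
    have db: "4 * (\<Sum>j\<in>J. c j) * (\<Sum>j\<in>J. d j) - 2 * (\<Sum>j\<in>J. c j * d j) \<le> 0"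
    proof (cases "bb \<le> 0")
      case True
      have "d = \<alpha>" unfolding d_def using True by simp
      then show ?thesis using True by (simp add: bb_def)
    next
      case False
      have "d = (\<lambda>j. - \<alpha> j)" unfolding d_def using False by simp
      then have e1: "(\<Sum>j\<in>J. d j) = - (\<Sum>j\<in>J. \<alpha> j)" and e2: "(\<Sum>j\<in>J. c j * d j) = - (\<Sum>j\<in>J. c j * \<alpha> j)"
        by (simp_all add: sum_negf)
      have "4 * (\<Sum>j\<in>J. c j) * (- (\<Sum>j\<in>J. \<alpha> j)) - 2 * (- (\<Sum>j\<in>J. c j * \<alpha> j)) = - bb"
        by (simp add: bb_def)
      then show ?thesis unfolding e1 e2 using False by linarith
    qed
    have Us: "U = (\<Sum>j\<in>J. (c j + s * d j) *\<^sub>R M j)" for s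
    proof -
      have "(\<Sum>j\<in>J. (c j + s * d j) *\<^sub>R M j) = (\<Sum>j\<in>J. c j *\<^sub>R M j) + s *\<^sub>R (\<Sum>j\<in>J. d j *\<^sub>R M j)"
      proof -
        have "(\<Sum>j\<in>J. (c j + s * d j) *\<^sub>R M j) = (\<Sum>j\<in>J. c j *\<^sub>R M j + s *\<^sub>R (d j *\<^sub>R M j))"
          by (intro sum.cong) (simp_all add: scaleR_add_left)
        also have "\<dots> = (\<Sum>j\<in>J. c j *\<^sub>R M j) + (\<Sum>j\<in>J. s *\<^sub>R (d j *\<^sub>R M j))"
          by (rule sum.distrib)
        also have "\<dots> = (\<Sum>j\<in>J. c j *\<^sub>R M j) + s *\<^sub>R (\<Sum>j\<in>J. d j *\<^sub>R M j)"
          by (simp only: scaleR_sum_right)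
        finally show ?thesis .
      qed
      then show ?thesis using UJ dsum by (simp only: scaleR_zero_right add_0_right)
    qed
    have pos: "\<forall>s. (\<forall>j\<in>J. 0 \<le> c j + s * d j) \<longrightarrow> 0 < (\<Sum>j\<in>J. c j + s * d j)"
    proof (intro allI impI)
      fix s assume nn: "\<forall>j\<in>J. 0 \<le> c j + s * d j"
      have "(\<Sum>j\<in>J. c j + s * d j) \<noteq> 0"
      proof
        assume "(\<Sum>j\<in>J. c j + s * d j) = 0"
        then have z: "\<forall>j\<in>J. c j + s * d j = 0" using sum_nonneg_eq_0_iff[OF fJ, of "\<lambda>j. c j + s * d j"] nn by simp
        have "(\<Sum>j\<in>J. (c j + s * d j) *\<^sub>R M j) = 0" using z by (intro sum.neutral) simp
        then have "U = 0" using Us[of s] by (simp only:)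
        then show False using assms by simp
      qed
      moreover have "0 \<le> (\<Sum>j\<in>J. c j + s * d j)" using nn by (intro sum_nonneg) auto
      ultimately show "0 < (\<Sum>j\<in>J. c j + s * d j)" by linarith
    qed
    obtain s where s: "\<forall>j\<in>J. 0 \<le> c j + s * d j" "\<exists>j\<in>J. c j + s * d j = 0"
       "cst J (\<lambda>j. c j + s * d j) \<le> cst J c"
      using half[OF fJ cpos dnz db pos] by blast
    define c1 where "c1 = (\<lambda>j. if j \<in> J then c j + s * d j else c j)"
    obtain j0 where j0: "j0 \<in> J" "c j0 + s * d j0 = 0" using s(2) by auto
    have sub: "{j. j < m \<and> c1 j \<noteq> 0} \<subseteq> J - {j0}"
      using j0 by (auto simp: c1_def J_def)
    have lt: "card {j. j < m \<and> c1 j \<noteq> 0} < card {j. j < m \<and> c j \<noteq> 0}"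
    proof -
      have "card {j. j < m \<and> c1 j \<noteq> 0} \<le> card (J - {j0})" using sub fJ by (intro card_mono) auto
      also have "\<dots> < card J" by (rule card_Diff1_less[OF fJ j0(1)])
      finally show ?thesis unfolding J_def .
    qed
    have U1: "U = (\<Sum>j<m. c1 j *\<^sub>R M j)"
    proof -
      have "(\<Sum>j<m. c1 j *\<^sub>R M j) = (\<Sum>j\<in>J. c1 j *\<^sub>R M j)"
        using JK by (intro sum.mono_neutral_right) (auto simp: c1_def J_def)
      also have "\<dots> = (\<Sum>j\<in>J. (c j + s * d j) *\<^sub>R M j)" by (intro sum.cong) (auto simp: c1_def)
      finally show ?thesis using Us[of s] by simp
    qed
    have nn1: "\<forall>j<m. 0 \<le> c1 j" using s(1) less.prems(2) by (auto simp: c1_def)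
    have "cst {..<m} c1 = cst J c1"
      using JK by (intro cst_restrict) (auto simp: c1_def J_def)
    also have "\<dots> = cst J (\<lambda>j. c j + s * d j)" unfolding cst_def by (simp add: c1_def)
    also have "\<dots> \<le> cst J c" by (rule s(3))
    also have "\<dots> = cst {..<m} c" using JK by (intro cst_restrict[symmetric]) (auto simp: J_def)
    finally have cle: "cst {..<m} c1 \<le> cst {..<m} c" .
    from less.hyps[OF lt U1 nn1] obtain c' where c': "U = (\<Sum>j<m. c' j *\<^sub>R M j)" "\<forall>j<m. 0 \<le> c' j"
        "card {j. j < m \<and> c' j \<noteq> 0} \<le> DIM('v)" "cst {..<m} c' \<le> cst {..<m} c1" by blast
    then show ?thesis using cle by (intro exI[of _ c']) auto
  qed
qed



lemma adjoint_mult: "adjoint_mat (A ** B) = adjoint_mat B ** adjoint_mat A"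
  by (simp add: adjoint_mat_def matrix_matrix_mult_def vec_eq_iff mult.commute)

lemma adjoint_one: "adjoint_mat (mat 1 :: complex^'n^'n) = mat 1"
  by (simp add: adjoint_mat_def mat_def vec_eq_iff)

lemma adjoint_neg: "adjoint_mat (- A) = - adjoint_mat A"
  by (simp add: adjoint_mat_def vec_eq_iff)

lemma unitary_mult:
  fixes A B :: "complex^'n^'n"
  assumes "unitary_mat A" "unitary_mat B" shows "unitary_mat (A ** B)"
proof -
  have "A ** B ** adjoint_mat (A ** B) = A ** (B ** adjoint_mat B) ** adjoint_mat A"
    by (simp add: adjoint_mult matrix_mul_assoc)
  also have "\<dots> = mat 1" using assms by (simp add: unitary_mat_def)
  finally have 1: "A ** B ** adjoint_mat (A ** B) = mat 1" .
  have "adjoint_mat (A ** B) ** (A ** B) = adjoint_mat B ** (adjoint_mat A ** A) ** B"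
    by (simp add: adjoint_mult matrix_mul_assoc)
  also have "\<dots> = mat 1" using assms by (simp add: unitary_mat_def)
  finally show ?thesis using 1 by (simp add: unitary_mat_def)
qed

lemma unitary_one: "unitary_mat (mat 1 :: complex^'n^'n)"
  by (simp add: unitary_mat_def adjoint_one)

lemma mult_neg_neg: "(- A) ** (- B) = (A ** B :: complex^'n^'m)"
  by (simp add: matrix_matrix_mult_def vec_eq_iff)

lemma unitary_neg: "unitary_mat A \<Longrightarrow> unitary_mat (- A)"
  by (simp add: unitary_mat_def adjoint_neg mult_neg_neg)

lemma kron_neg: "kron (- V) W = - kron V W"
  by (simp add: kron_def vec_eq_iff)

lemma unitary_nonzero:
  fixes U :: "complex^'n^'n"
  shows "unitary_mat U \<Longrightarrow> U \<noteq> 0"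
proof
  assume "unitary_mat U" "U = 0"
  then have "(mat 1 :: complex^'n^'n) = 0" by (simp add: unitary_mat_def)
  then have "(mat 1 :: complex^'n^'n) $ undefined $ undefined = 0" by simp
  then show False by (simp add: mat_def)
qed

lemma unitary_entry:
  fixes U :: "complex^'n^'n"
  assumes "unitary_mat U" shows "norm (U $ i $ j) \<le> 1"
proof -
  have "(U ** adjoint_mat U) $ i $ i = 1" using assms by (simp add: unitary_mat_def mat_def)
  then have "(\<Sum>k\<in>UNIV. U $ i $ k * cnj (U $ i $ k)) = 1"
    by (simp add: matrix_matrix_mult_def adjoint_mat_def)
  then have "(\<Sum>k\<in>UNIV. complex_of_real ((norm (U $ i $ k))^2)) = 1"
    by (simp add: complex_mult_cnj cmod_def)
  then have s: "(\<Sum>k\<in>UNIV. (norm (U $ i $ k))^2) = 1"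
    by (metis of_real_eq_1_iff of_real_sum)
  have "(norm (U $ i $ j))^2 \<le> (\<Sum>k\<in>UNIV. (norm (U $ i $ k))^2)"
    by (rule member_le_sum) auto
  then have "(norm (U $ i $ j))^2 \<le> 1" using s by simp
  then show ?thesis by (simp add: power_le_one_iff abs_square_le_1)
qed



lemma dim_eq: "DIM(complex^('a::finite\<times>'b::finite)^('a\<times>'b)) = 2 * CARD('a)^2 * CARD('b)^2"
  by (simp add: power2_eq_square)

lemma cost_cst: "decomp_cost m c = cst {..<m} (\<lambda>j. \<bar>c j\<bar>)"
  by (simp add: decomp_cost_def cst_def)

lemma reduceN:
  fixes U :: "complex^('a::finite \<times> 'b::finite)^('a \<times> 'b)"
  assumes U: "unitary_mat U" and D: "is_decomp U m c V W"
  shows "\<exists>c' V' W'. is_decomp U (2 * CARD('a)^2 * CARD('b)^2) c' V' W' \<and>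
           decomp_cost (2 * CARD('a)^2 * CARD('b)^2) c' \<le> decomp_cost m c"
proof -
  define N where "N = 2 * CARD('a)^2 * CARD('b)^2"
  have N1: "N \<ge> 1" unfolding N_def by simp
  define V1 where "V1 = (\<lambda>j. if c j < 0 then - V j else V j)"
  define c1 where "c1 = (\<lambda>j. \<bar>c j\<bar>)"
  define M where "M = (\<lambda>j. kron (V1 j) (W j))"
  have uV1: "\<forall>j<m. unitary_mat (V1 j) \<and> unitary_mat (W j)"
    using D by (auto simp: is_decomp_def V1_def unitary_neg)
  have "U = (\<Sum>j<m. c j *\<^sub>R kron (V j) (W j))" using D by (simp add: is_decomp_def)
  also have "\<dots> = (\<Sum>j<m. c1 j *\<^sub>R M j)"
    by (intro sum.cong) (auto simp: c1_def M_def V1_def kron_neg)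
  finally have U1: "U = (\<Sum>j<m. c1 j *\<^sub>R M j)" .
  obtain c2 where c2: "U = (\<Sum>j<m. c2 j *\<^sub>R M j)" "\<forall>j<m. 0 \<le> c2 j"
     "card {j. j < m \<and> c2 j \<noteq> 0} \<le> DIM(complex^('a\<times>'b)^('a\<times>'b))" "cst {..<m} c2 \<le> cst {..<m} c1"
    using reduce[OF unitary_nonzero[OF U] U1] by (auto simp: c1_def)
  define S where "S = {j. j < m \<and> c2 j \<noteq> 0}"
  define k where "k = card S"
  have fS: "finite S" unfolding S_def by auto
  have kN: "k \<le> N" using c2(3) unfolding k_def S_def N_def dim_eq .
  obtain g where g: "bij_betw g {0..<k} S" using ex_bij_betw_nat_finite[OF fS] unfolding k_def by blast
  have g': "bij_betw g {..<k} S" using g by (simp add: atLeast0LessThan)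
  define c3 where "c3 = (\<lambda>i. if i < k then c2 (g i) else 0)"
  define V3 where "V3 = (\<lambda>i. if i < k then V1 (g i) else mat 1)"
  define W3 where "W3 = (\<lambda>i. if i < k then W (g i) else mat 1)"
  have gS: "g i \<in> S" if "i < k" for i using g' that by (auto simp: bij_betw_def)
  have Sm: "S \<subseteq> {..<m}" unfolding S_def by auto
  have u3: "\<forall>i<N. unitary_mat (V3 i) \<and> unitary_mat (W3 i)"
    using uV1 gS Sm by (auto simp: V3_def W3_def unitary_one)
  have "(\<Sum>i<N. c3 i *\<^sub>R kron (V3 i) (W3 i)) = (\<Sum>i<k. c3 i *\<^sub>R kron (V3 i) (W3 i))"
    using kN by (intro sum.mono_neutral_right) (auto simp: c3_def)
  also have "\<dots> = (\<Sum>i<k. c2 (g i) *\<^sub>R M (g i))"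
    by (intro sum.cong) (auto simp: c3_def V3_def W3_def M_def)
  also have "\<dots> = (\<Sum>j\<in>S. c2 j *\<^sub>R M j)"
    by (rule sum.reindex_bij_betw[OF g'])
  also have "\<dots> = (\<Sum>j<m. c2 j *\<^sub>R M j)"
    using Sm by (intro sum.mono_neutral_left) (auto simp: S_def)
  finally have sum3: "U = (\<Sum>i<N. c3 i *\<^sub>R kron (V3 i) (W3 i))" using c2(1) by simp
  have "decomp_cost N c3 = cst {..<N} c3"
  proof -
    have "(\<lambda>j. \<bar>c3 j\<bar>) = c3"
    proof
      fix j show "\<bar>c3 j\<bar> = c3 j" using c2(2) gS[of j] Sm by (auto simp: c3_def)
    qed
    then show ?thesis unfolding cost_cst by simp
  qed
  also have "\<dots> = cst {..<k} c3"
    using kN by (intro cst_restrict) (auto simp: c3_def)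
  also have "\<dots> = cst S c2"
  proof -
    have "(\<Sum>i<k. c3 i) = (\<Sum>j\<in>S. c2 j)"
      by (subst sum.reindex_bij_betw[OF g', symmetric]) (auto simp: c3_def)
    moreover have "(\<Sum>i<k. (c3 i)^2) = (\<Sum>j\<in>S. (c2 j)^2)"
      by (subst sum.reindex_bij_betw[OF g', symmetric]) (auto simp: c3_def)
    ultimately show ?thesis unfolding cst_def by simp
  qed
  also have "\<dots> = cst {..<m} c2"
    using Sm by (intro cst_restrict[symmetric]) (auto simp: S_def)
  also have "\<dots> \<le> cst {..<m} c1" by (rule c2(4))
  also have "\<dots> = decomp_cost m c" unfolding cost_cst c1_def ..
  finally have "decomp_cost N c3 \<le> decomp_cost m c" .
  then show ?thesis using N1 u3 sum3 unfolding N_def is_decomp_def by blast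
qed



definition diagm :: "'n \<Rightarrow> complex \<Rightarrow> complex^'n^'n" where
  "diagm a w = (\<chi> i j. if i = j then (if i = a then w else 1) else 0)"

definition trp :: "'n \<Rightarrow> 'n \<Rightarrow> 'n \<Rightarrow> 'n" where
  "trp a b i = (if i = a then b else if i = b then a else i)"

definition permm :: "'n \<Rightarrow> 'n \<Rightarrow> complex^'n^'n" where
  "permm a b = (\<chi> i j. if j = trp a b i then 1 else 0)"

lemma unitary_diagm:
  fixes a :: "'n::finite"
  assumes "w * cnj w = 1" shows "unitary_mat (diagm a w)"
proof -
  have 1: "diagm a w ** adjoint_mat (diagm a w) = mat 1"
    using assms by (auto simp: diagm_def matrix_matrix_mult_def adjoint_mat_def mat_def vec_eq_iff
        if_distrib[of "\<lambda>x. x * _"] if_distrib[of "\<lambda>x. _ * x"] cong: if_cong)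
  have 2: "adjoint_mat (diagm a w) ** diagm a w = mat 1"
    using assms by (auto simp: diagm_def matrix_matrix_mult_def adjoint_mat_def mat_def vec_eq_iff
        if_distrib[of "\<lambda>x. x * _"] if_distrib[of "\<lambda>x. _ * x"] mult.commute cong: if_cong)
  show ?thesis using 1 2 by (simp add: unitary_mat_def)
qed

lemma trp_inj: "trp a b i = trp a b j \<longleftrightarrow> i = j"
  by (auto simp: trp_def)

lemma trp_trp: "trp a b (trp a b i) = i"
  by (auto simp: trp_def)

lemma unitary_permm:
  fixes a :: "'n::finite"
  shows "unitary_mat (permm a b)"
proof -
  have 1: "permm a b ** adjoint_mat (permm a b) = mat 1"
    by (auto simp: permm_def matrix_matrix_mult_def adjoint_mat_def mat_def vec_eq_iff
        if_distrib[of "\<lambda>x. x * _"] trp_inj cong: if_cong)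
  have 2: "adjoint_mat (permm a b) ** permm a b = mat 1"
  proof -
    have e: "(j = trp a b k) = (trp a b j = k)" for j k :: 'n by (metis trp_trp)
    show ?thesis
    by (auto simp: permm_def matrix_matrix_mult_def adjoint_mat_def mat_def vec_eq_iff
        if_distrib[of "\<lambda>x. x * _"] if_distrib[of cnj] e trp_inj trp_trp cong: if_cong)
  qed
  show ?thesis using 1 2 by (simp add: unitary_mat_def)
qed

lemma e_aa_1: "(axis a (axis a 1) :: complex^'n::finite^'n) = (1/2) *\<^sub>R mat 1 - (1/2) *\<^sub>R diagm a (-1)"
  by (auto simp: vec_eq_iff axis_def mat_def diagm_def complex_eq_iff)

lemma e_aa_i: "(axis a (axis a \<i>) :: complex^'n::finite^'n) = diagm a \<i> - (1/2) *\<^sub>R mat 1 - (1/2) *\<^sub>R diagm a (-1)"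
  by (auto simp: vec_eq_iff axis_def mat_def diagm_def complex_eq_iff)

lemma e_ab: "(axis a (axis b z) :: complex^'n::finite^'n) = axis a (axis a z) ** permm a b"
  by (auto simp: vec_eq_iff axis_def permm_def matrix_matrix_mult_def trp_def
        if_distrib[of "\<lambda>x. x * _"] if_distrib[of "\<lambda>x. x $ _"] cong: if_cong)

lemma linear_rmult: "linear (\<lambda>X::complex^'n::finite^'m. X ** P)"
  by (rule linearI) (simp_all add: vec_eq_iff matrix_matrix_mult_def sum.distrib distrib_right
      scaleR_sum_right)

lemma span_rmult:
  fixes P :: "complex^'n::finite^'n"
  assumes "unitary_mat P" "X \<in> span {V. unitary_mat V}"
  shows "X ** P \<in> span {V. unitary_mat V}"
proof -
  have "X ** P \<in> (\<lambda>X. X ** P) ` span {V. unitary_mat V}" using assms(2) by blast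
  also have "\<dots> = span ((\<lambda>X. X ** P) ` {V. unitary_mat V})"
    by (rule span_linear_image[OF linear_rmult, symmetric])
  also have "\<dots> \<subseteq> span {V. unitary_mat V}"
    using assms(1) by (intro span_mono) (auto intro: unitary_mult)
  finally show ?thesis .
qed

lemma span_unit:
  fixes a b :: "'n::finite"
  assumes "z = 1 \<or> z = \<i>"
  shows "(axis a (axis b z) :: complex^'n^'n) \<in> span {V. unitary_mat V}"
proof -
  have d1: "diagm a (-1) \<in> span {V. unitary_mat V}" by (rule span_base) (simp add: unitary_diagm)
  have di: "diagm a \<i> \<in> span {V. unitary_mat V}" by (rule span_base) (simp add: unitary_diagm)
  have o: "mat 1 \<in> span {V. unitary_mat V}" by (rule span_base) (simp add: unitary_one)
  have "(axis a (axis a z) :: complex^'n^'n) \<in> span {V. unitary_mat V}"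
    using assms
  proof
    assume "z = 1"
    then show ?thesis unfolding \<open>z = 1\<close> e_aa_1 using d1 o by (intro span_diff span_scale)
  next
    assume "z = \<i>"
    then show ?thesis unfolding \<open>z = \<i>\<close> e_aa_i using d1 di o by (intro span_diff span_scale)
  qed
  then show ?thesis by (subst e_ab) (rule span_rmult[OF unitary_permm])
qed

lemma linear_kron_l: "linear (\<lambda>X. kron X W)"
  by (rule linearI) (simp_all add: vec_eq_iff kron_def distrib_right)

lemma linear_kron_r: "linear (\<lambda>Y. kron X Y)"
  by (rule linearI) (simp_all add: vec_eq_iff kron_def distrib_left)

lemma kron_span:
  fixes X :: "complex^'a::finite^'a" and Y :: "complex^'b::finite^'b"
  assumes X: "X \<in> span {V. unitary_mat V}" and Y: "Y \<in> span {W. unitary_mat W}"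
  shows "kron X Y \<in> span {kron V W | V W. unitary_mat V \<and> unitary_mat W}"
    (is "_ \<in> span ?K")
proof -
  have l: "kron X W \<in> span ?K" if W: "unitary_mat W" for W
  proof -
    have "kron X W \<in> (\<lambda>X. kron X W) ` span {V. unitary_mat V}" using X by blast
    also have "\<dots> = span ((\<lambda>X. kron X W) ` {V. unitary_mat V})"
      by (rule span_linear_image[OF linear_kron_l, symmetric])
    also have "\<dots> \<subseteq> span ?K" using W by (intro span_mono) auto
    finally show ?thesis .
  qed
  have "kron X Y \<in> (\<lambda>Y. kron X Y) ` span {W. unitary_mat W}" using Y by blast
  also have "\<dots> = span ((\<lambda>Y. kron X Y) ` {W. unitary_mat W})"
    by (rule span_linear_image[OF linear_kron_r, symmetric])
  also have "\<dots> \<subseteq> span (span ?K)" using l by (intro span_mono) auto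
  also have "\<dots> = span ?K" by (rule span_span)
  finally show ?thesis .
qed

lemma basis_kron:
  "(axis p (axis q z) :: complex^('a::finite\<times>'b::finite)^('a\<times>'b)) =
     kron (axis (fst p) (axis (fst q) z)) (axis (snd p) (axis (snd q) 1))"
  by (auto simp: vec_eq_iff kron_def axis_def prod_eq_iff)

lemma span_K_all:
  fixes X :: "complex^('a::finite\<times>'b::finite)^('a\<times>'b)"
  shows "X \<in> span {kron V W | V W. unitary_mat V \<and> unitary_mat W}"
    (is "_ \<in> span ?K")
proof -
  have B: "b \<in> span ?K" if "b \<in> (Basis :: (complex^('a\<times>'b)^('a\<times>'b)) set)" for b
  proof -
    from that obtain p u where pu: "b = axis p u" "u \<in> (Basis :: (complex^('a\<times>'b)) set)"
      unfolding Basis_vec_def by blast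
    from pu(2) obtain q z where qz: "u = axis q z" "z \<in> (Basis :: complex set)"
      unfolding Basis_vec_def by blast
    have pqz: "b = axis p (axis q z)" "z = 1 \<or> z = \<i>" using pu qz by (auto simp: Basis_complex_def)
    show ?thesis unfolding pqz(1) basis_kron
      by (intro kron_span span_unit) (use pqz(2) in auto)
  qed
  have "X = (\<Sum>b\<in>Basis. (X \<bullet> b) *\<^sub>R b)" by (simp add: euclidean_representation)
  also have "\<dots> \<in> span ?K" using B by (intro span_sum span_scale) auto
  finally show ?thesis .
qed

lemma exists_decomp:
  fixes U :: "complex^('a::finite \<times> 'b::finite)^('a \<times> 'b)"
  assumes U: "unitary_mat U"
  shows "\<exists>m c V W. is_decomp U m c V W"
proof -
  let ?K = "{kron V W | V W. unitary_mat V \<and> unitary_mat W}"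
  obtain t r where t: "finite t" "t \<subseteq> ?K" "U = (\<Sum>a\<in>t. r a *\<^sub>R a)"
    using span_K_all[of U] unfolding span_explicit by blast
  have tne: "t \<noteq> {}" using t(3) unitary_nonzero[OF U] by auto
  obtain h where h: "bij_betw h {0..<card t} t" using ex_bij_betw_nat_finite[OF t(1)] by blast
  have h': "bij_betw h {..<card t} t" using h by (simp add: atLeast0LessThan)
  define pick :: "complex^('a\<times>'b)^('a\<times>'b) \<Rightarrow> (complex^'a^'a) \<times> (complex^'b^'b)"
    where "pick = (\<lambda>a. SOME p. unitary_mat (fst p) \<and> unitary_mat (snd p) \<and> a = kron (fst p) (snd p))"
  have pick: "unitary_mat (fst (pick a)) \<and> unitary_mat (snd (pick a)) \<and> a = kron (fst (pick a)) (snd (pick a))"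
    if "a \<in> ?K" for a
  proof -
    from that obtain V W where "unitary_mat V" "unitary_mat W" "a = kron V W" by blast
    then have "\<exists>p. unitary_mat (fst p) \<and> unitary_mat (snd p) \<and> a = kron (fst p) (snd p)"
      by (intro exI[of _ "(V, W)"]) auto
    then show ?thesis unfolding pick_def by (rule someI_ex)
  qed
  have hK: "h j \<in> ?K" if "j < card t" for j
  proof -
    have "h j \<in> t" using bij_betw_apply[OF h'] that by simp
    then show ?thesis using t(2) by blast
  qed
  define c where "c = (\<lambda>j. r (h j))"
  define V where "V = (\<lambda>j. fst (pick (h j)))"
  define W where "W = (\<lambda>j. snd (pick (h j)))"
  have "(\<Sum>j<card t. c j *\<^sub>R kron (V j) (W j)) = (\<Sum>j<card t. r (h j) *\<^sub>R h j)"
    using pick[OF hK] by (intro sum.cong) (auto simp: c_def V_def W_def)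
  also have "\<dots> = (\<Sum>a\<in>t. r a *\<^sub>R a)" by (rule sum.reindex_bij_betw[OF h'])
  finally have "U = (\<Sum>j<card t. c j *\<^sub>R kron (V j) (W j))" using t(3) by simp
  moreover have "card t \<ge> 1" using t(1) tne by (simp add: Suc_le_eq card_gt_0_iff)
  moreover have "\<forall>j<card t. unitary_mat (V j) \<and> unitary_mat (W j)"
    using pick[OF hK] by (auto simp: V_def W_def)
  ultimately show ?thesis unfolding is_decomp_def by blast
qed



lemma cont_mmult[continuous_intros]:
  fixes f :: "'x::topological_space \<Rightarrow> complex^'n::finite^'m::finite" and g :: "'x \<Rightarrow> complex^'k::finite^'n"
  assumes "continuous_on S f" "continuous_on S g"
  shows "continuous_on S (\<lambda>x. f x ** g x)"
  unfolding matrix_matrix_mult_def using assms by (intro continuous_intros)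

lemma cont_adj[continuous_intros]:
  fixes f :: "'x::topological_space \<Rightarrow> complex^'n::finite^'m::finite"
  assumes "continuous_on S f"
  shows "continuous_on S (\<lambda>x. adjoint_mat (f x))"
  unfolding adjoint_mat_def using assms by (intro continuous_intros)

lemma cont_kron[continuous_intros]:
  fixes f :: "'x::topological_space \<Rightarrow> complex^'a::finite^'a" and g :: "'x \<Rightarrow> complex^'b::finite^'b"
  assumes "continuous_on S f" "continuous_on S g"
  shows "continuous_on S (\<lambda>x. kron (f x) (g x))"
  unfolding kron_def using assms by (intro continuous_intros)

lemma closed_unitary:
  fixes f :: "'x::topological_space \<Rightarrow> complex^'n::finite^'n"
  assumes "continuous_on UNIV f"
  shows "closed {x. unitary_mat (f x)}"
  unfolding unitary_mat_def using assms
  by (intro closed_Collect_conj closed_Collect_eq continuous_intros)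

lemma norm_vec_le_sum: "norm (v :: 'x::real_normed_vector^'n::finite) \<le> (\<Sum>i\<in>UNIV. norm (v $ i))"
  unfolding norm_vec_def by (rule L2_set_le_sum) simp

lemma unitary_norm:
  fixes U :: "complex^'n::finite^'n"
  assumes "unitary_mat U" shows "norm U \<le> real (CARD('n) * CARD('n))"
proof -
  have "norm U \<le> (\<Sum>i\<in>UNIV. norm (U $ i))" by (rule norm_vec_le_sum)
  also have "\<dots> \<le> (\<Sum>i\<in>(UNIV::'n set). (\<Sum>j\<in>(UNIV::'n set). norm (U $ i $ j)))"
    by (intro sum_mono norm_vec_le_sum)
  also have "\<dots> \<le> (\<Sum>i\<in>(UNIV::'n set). (\<Sum>j\<in>(UNIV::'n set). 1))"
    using unitary_entry[OF assms] by (intro sum_mono) auto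
  also have "\<dots> = real (CARD('n) * CARD('n))" by simp
  finally show ?thesis .
qed

lemma sumsq_le: "finite A \<Longrightarrow> (\<Sum>i\<in>A. ((f::_\<Rightarrow>real) i)^2) \<le> (\<Sum>i\<in>A. \<bar>f i\<bar>)^2"
proof -
  assume A: "finite A"
  have "\<bar>f i\<bar> \<le> (\<Sum>i\<in>A. \<bar>f i\<bar>)" if "i \<in> A" for i
    using A that member_le_sum[of i A "\<lambda>i. \<bar>f i\<bar>"] by simp
  then have "(f i)^2 \<le> \<bar>f i\<bar> * (\<Sum>i\<in>A. \<bar>f i\<bar>)" if "i \<in> A" for i
  proof -
    have "(f i)^2 = \<bar>f i\<bar> * \<bar>f i\<bar>" by (simp add: power2_eq_square)
    also have "\<dots> \<le> \<bar>f i\<bar> * (\<Sum>i\<in>A. \<bar>f i\<bar>)" using that \<open>\<And>i. i \<in> A \<Longrightarrow> \<bar>f i\<bar> \<le> _\<close> by (intro mult_left_mono) auto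
    finally show ?thesis .
  qed
  then have "(\<Sum>i\<in>A. (f i)^2) \<le> (\<Sum>i\<in>A. \<bar>f i\<bar> * (\<Sum>i\<in>A. \<bar>f i\<bar>))" by (intro sum_mono) auto
  also have "\<dots> = (\<Sum>i\<in>A. \<bar>f i\<bar>)^2" by (simp add: power2_eq_square sum_distrib_right)
  finally show ?thesis .
qed



theorem mainTheorem12:
  fixes U :: "complex^('a::finite \<times> 'b::finite)^('a \<times> 'b)"
  assumes "unitary_mat U"
  shows "\<exists>c V W. is_decomp U (2 * CARD('a)^2 * CARD('b)^2) c V W \<and>
           (\<forall>m c' V' W'. is_decomp U m c' V' W' \<longrightarrow>
              decomp_cost (2 * CARD('a)^2 * CARD('b)^2) c \<le> decomp_cost m c')"
proof -
  define N where "N = 2 * CARD('a)^2 * CARD('b)^2"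
  have N1: "N \<ge> 1" unfolding N_def by simp
  obtain m0 c0 V0 W0 where D0: "is_decomp U m0 c0 V0 W0" using exists_decomp[OF assms] by blast
  obtain cA VA WA where A: "is_decomp U N cA VA WA"
    using reduceN[OF assms D0] unfolding N_def by blast
  define C0 where "C0 = decomp_cost N cA"
  have cardI: "CARD(('a\<times>'b)\<times>('a\<times>'b)\<times>bool) = N" by (simp add: N_def power2_eq_square)
  obtain e :: "nat \<Rightarrow> ('a\<times>'b)\<times>('a\<times>'b)\<times>bool" where e: "bij_betw e {..<N} UNIV"
    using ex_bij_betw_nat_finite[of "UNIV :: (('a\<times>'b)\<times>('a\<times>'b)\<times>bool) set"] cardI
    by (auto simp: atLeast0LessThan)
  have reidx: "(\<Sum>j<N. g (e j)) = (\<Sum>i\<in>UNIV. g i)" for g :: "_ \<Rightarrow> 'z::comm_monoid_add"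
    by (rule sum.reindex_bij_betw[OF e])
  define costX :: "(real \<times> (complex^'a^'a) \<times> (complex^'b^'b))^(('a\<times>'b)\<times>('a\<times>'b)\<times>bool) \<Rightarrow> real"
    where "costX x = 2 * (\<Sum>i\<in>UNIV. \<bar>fst (x$i)\<bar>)^2 - (\<Sum>i\<in>UNIV. (fst (x$i))^2)" for x
  define F where "F = {x. (\<forall>i. unitary_mat (fst (snd (x$i))) \<and> unitary_mat (snd (snd (x$i)))) \<and>
      (\<Sum>i\<in>UNIV. fst (x$i) *\<^sub>R kron (fst (snd (x$i))) (snd (snd (x$i)))) = U \<and> costX x \<le> C0}"
  have toD: "is_decomp U N (\<lambda>j. fst (x $ e j)) (\<lambda>j. fst (snd (x $ e j))) (\<lambda>j. snd (snd (x $ e j)))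
      \<and> decomp_cost N (\<lambda>j. fst (x $ e j)) = costX x" if x: "x \<in> F" for x
  proof -
    have "(\<Sum>j<N. fst (x $ e j) *\<^sub>R kron (fst (snd (x $ e j))) (snd (snd (x $ e j)))) = U"
      using x unfolding F_def by (subst reidx) simp
    moreover have "decomp_cost N (\<lambda>j. fst (x $ e j)) = costX x"
      unfolding decomp_cost_def costX_def
      by (subst reidx[of "\<lambda>i. \<bar>fst (x $ i)\<bar>"], subst reidx[of "\<lambda>i. (fst (x $ i))^2"]) (rule refl)
    moreover have "\<forall>j<N. unitary_mat (fst (snd (x $ e j))) \<and> unitary_mat (snd (snd (x $ e j)))"
      using x unfolding F_def by blast
    ultimately show ?thesis using N1 unfolding is_decomp_def by simp
  qed
  have fromD: "\<exists>x\<in>F. costX x = decomp_cost N c" if D: "is_decomp U N c V W" and Cle: "decomp_cost N c \<le> C0"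
    for c V W
  proof -
    define ie where "ie = inv_into {..<N} e"
    define x :: "(real \<times> (complex^'a^'a) \<times> (complex^'b^'b))^(('a\<times>'b)\<times>('a\<times>'b)\<times>bool)"
      where "x = (\<chi> i. (c (ie i), V (ie i), W (ie i)))"
    have ieN: "ie i < N" for i
    proof -
      have "i \<in> e ` {..<N}" using e by (simp add: bij_betw_def)
      then show ?thesis unfolding ie_def using inv_into_into[of i e "{..<N}"] by simp
    qed
    have xe: "x $ e j = (c j, V j, W j)" if "j < N" for j
      using bij_betw_inv_into_left[OF e, of j] that by (simp add: x_def ie_def)
    have un: "\<forall>i. unitary_mat (fst (snd (x$i))) \<and> unitary_mat (snd (snd (x$i)))"
      using D ieN unfolding is_decomp_def x_def by simp
    have "(\<Sum>i\<in>UNIV. fst (x$i) *\<^sub>R kron (fst (snd (x$i))) (snd (snd (x$i))))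
        = (\<Sum>j<N. fst (x $ e j) *\<^sub>R kron (fst (snd (x $ e j))) (snd (snd (x $ e j))))"
      by (subst reidx) (rule refl)
    also have "\<dots> = (\<Sum>j<N. c j *\<^sub>R kron (V j) (W j))" by (intro sum.cong) (auto simp: xe)
    also have "\<dots> = U" using D unfolding is_decomp_def by simp
    finally have su: "(\<Sum>i\<in>UNIV. fst (x$i) *\<^sub>R kron (fst (snd (x$i))) (snd (snd (x$i)))) = U" .
    have "costX x = 2 * (\<Sum>j<N. \<bar>fst (x $ e j)\<bar>)^2 - (\<Sum>j<N. (fst (x $ e j))^2)"
      unfolding costX_def
      by (subst reidx[of "\<lambda>i. \<bar>fst (x $ i)\<bar>"], subst reidx[of "\<lambda>i. (fst (x $ i))^2"]) (rule refl)
    also have "\<dots> = decomp_cost N c" unfolding decomp_cost_def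
      by (intro arg_cong2[where f="\<lambda>a b. 2 * a^2 - b"] sum.cong) (auto simp: xe)
    finally have co: "costX x = decomp_cost N c" .
    have "costX x \<le> C0" using co Cle by simp
    with un su have "x \<in> F" unfolding F_def by blast
    then show ?thesis using co by blast
  qed
  have contX: "continuous_on S costX" for S
    unfolding costX_def by (intro continuous_intros)
  have closedF: "closed F"
    unfolding F_def
    by (intro closed_Collect_conj closed_Collect_all closed_unitary closed_Collect_eq closed_Collect_le
        continuous_intros contX)
  have boundedF: "bounded F"
  proof -
    define R where "R = max 1 C0 + real (CARD('a) * CARD('a)) + real (CARD('b) * CARD('b))"
    have "norm x \<le> real N * R" if x: "x \<in> F" for x
    proof -
      have cb: "\<bar>fst (x$i)\<bar> \<le> max 1 C0" for i
      proof -
        define T where "T = (\<Sum>i\<in>UNIV. \<bar>fst (x$i)\<bar>)"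
        have "(\<Sum>i\<in>UNIV. (fst (x$i))^2) \<le> T^2" unfolding T_def by (rule sumsq_le) simp
        then have "T^2 \<le> costX x" unfolding costX_def T_def by simp
        then have T2: "T^2 \<le> C0" using x unfolding F_def by simp
        have ci: "\<bar>fst (x$i)\<bar> \<le> T" unfolding T_def
          using member_le_sum[of i UNIV "\<lambda>i. \<bar>fst (x$i)\<bar>"] by simp
        show ?thesis
        proof (cases "T \<le> 1")
          case True then show ?thesis using ci by simp
        next
          case False
          then have "T \<le> T^2" by (simp add: power2_eq_square)
          then show ?thesis using ci T2 by simp
        qed
      qed
      have "norm x \<le> (\<Sum>i\<in>UNIV. norm (x $ i))" by (rule norm_vec_le_sum)
      also have "\<dots> \<le> (\<Sum>i\<in>(UNIV::(('a\<times>'b)\<times>('a\<times>'b)\<times>bool) set). R)"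
      proof (intro sum_mono)
        fix i
        obtain r A B where xi: "x $ i = (r, A, B)" by (cases "x $ i") auto
        have "unitary_mat (fst (snd (x$i))) \<and> unitary_mat (snd (snd (x$i)))" using x unfolding F_def by blast
        then have uA: "unitary_mat A" "unitary_mat B" using xi by simp_all
        have "norm (x $ i) \<le> norm r + (norm A + norm B)"
        proof -
          have "norm (r, A, B) \<le> norm r + norm (A, B)" by (rule norm_Pair_le)
          also have "\<dots> \<le> norm r + (norm A + norm B)" using norm_Pair_le[of A B] by simp
          finally show ?thesis unfolding xi .
        qed
        also have "\<dots> \<le> R" unfolding R_def using cb[of i] xi unitary_norm[OF uA(1)] unitary_norm[OF uA(2)]
          by simp
        finally show "norm (x $ i) \<le> R" .
      qed
      also have "\<dots> = real N * R" using cardI by simp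
      finally show ?thesis .
    qed
    then show ?thesis unfolding bounded_iff by blast
  qed
  have compF: "compact F" using closedF boundedF by (simp add: compact_eq_bounded_closed)
  have neF: "F \<noteq> {}" using fromD[OF A] unfolding C0_def by auto
  obtain x0 where x0: "x0 \<in> F" "\<forall>y\<in>F. costX x0 \<le> costX y"
    using continuous_attains_inf[OF compF neF contX] by blast
  have D0': "is_decomp U N (\<lambda>j. fst (x0 $ e j)) (\<lambda>j. fst (snd (x0 $ e j))) (\<lambda>j. snd (snd (x0 $ e j)))"
     and c0: "decomp_cost N (\<lambda>j. fst (x0 $ e j)) = costX x0" using toD[OF x0(1)] by auto
  have opt: "decomp_cost N (\<lambda>j. fst (x0 $ e j)) \<le> decomp_cost m c'" if D: "is_decomp U m c' V' W'" for m c' V' W'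
  proof -
    obtain cD VD WD where DD: "is_decomp U N cD VD WD" "decomp_cost N cD \<le> decomp_cost m c'"
      using reduceN[OF assms D] unfolding N_def by blast
    show ?thesis
    proof (cases "decomp_cost N cD \<le> C0")
      case True
      then obtain y where y: "y \<in> F" "costX y = decomp_cost N cD" using fromD[OF DD(1)] by blast
      then show ?thesis using x0(2) c0 DD(2) by fastforce
    next
      case False
      have "costX x0 \<le> C0" using x0(1) unfolding F_def by simp
      then show ?thesis using False c0 DD(2) by simp
    qed
  qed
  show ?thesis using D0' opt unfolding N_def by blast
qed

end
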